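(* Let $K\ge 2$ and positive integers $M,N,d$ with $d\le\min(M,N)$. If $d\le\min(M,N-1)$, then $(M\times N,d)^K$ is proper if and only if $((M+1)\times(N-1),d)^K$ is proper (equivalently, one is improper iff the other is). Similarly, if $d\le\min(M-1,N)$, then $(M\times N,d)^K$ is proper if and only if $((M-1)\times(N+1),d)^K$ is proper.
   Context: $(M\times N,d)^K$ is the $K$-user interference network where every transmitter has $M$ antennas, every receiver has $N$ antennas and every user demands $d$ degrees of freedom. Associate abstract variables: for each transmitter $j$ and $n\in\{1,\dots,d\}$, $M-d$ variables $x^{[j]}_{n,i}$; for each receiver $k$ and $m\in\{1,\dots,d\}$, $N-d$ variables $y^{[k]}_{m,i}$. Equations are the symbols $E^{mn}_{kj}$ for $j\ne k$, $m,n\in\{1,\dots,d\}$, with $\mathrm{var}(E^{mn}_{kj})=\{x^{[j]}_{n,i}\}_i\cup\{y^{[k]}_{m,i}\}_i$; $\mathcal E$ is the set of all equations. The system is proper if for every $S\subseteq\mathcal E$, $|S|\le\left|\bigcup_{E\in S}\mathrm{var}(E)\right|$, and improper otherwise. *)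

theory Defs
  imports Main
begin

text \<open>XV j n i : transmitter j, stream n, index i (i < M - d);
  YV k m i : receiver k, stream m, index i (i < N - d).
  Users are indexed by 1..K, streams by 1..d, variable indices by 0..<(M-d) resp. 0..<(N-d).\<close>
datatype avar = XV nat nat nat | YV nat nat nat

text \<open>Equation E^{mn}_{kj} is represented as the tuple (k, j, m, n).\<close>
type_synonym equation = "nat \<times> nat \<times> nat \<times> nat"

definition equations :: "nat \<Rightarrow> nat \<Rightarrow> equation set" where
  "equations K d = {(k, j, m, n). k \<in> {1..K} \<and> j \<in> {1..K} \<and> j \<noteq> k \<and> m \<in> {1..d} \<and> n \<in> {1..d}}"

definition var :: "nat \<Rightarrow> nat \<Rightarrow> nat \<Rightarrow> equation \<Rightarrow> avar set" where
  "var M N d E = (case E of (k, j, m, n) \<Rightarrow>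
      {XV j n i | i. i < M - d} \<union> {YV k m i | i. i < N - d})"

definition proper :: "nat \<Rightarrow> nat \<Rightarrow> nat \<Rightarrow> nat \<Rightarrow> bool" where
  "proper K M N d \<longleftrightarrow>
     (\<forall>S \<subseteq> equations K d. card S \<le> card (\<Union>E\<in>S. var M N d E))"

end

theory Submission
  imports Defs
begin

lemma eq_fin: "finite (equations K d)"
proof -
  have "equations K d \<subseteq> {1..K} \<times> {1..K} \<times> {1..d} \<times> {1..d}"
    unfolding equations_def by auto
  thus ?thesis by (rule finite_subset) auto
qed

lemma var_fin: "finite (var M N d E)"
proof -
  obtain k j m n where E: "E = (k,j,m,n)" by (cases E) auto
  have "{XV j n i | i. i < M - d} = (\<lambda>i. XV j n i) ` {..<M-d}" by auto
  moreover have "{YV k m i | i. i < N - d} = (\<lambda>i. YV k m i) ` {..<N-d}" by auto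
  ultimately show ?thesis unfolding var_def E by simp
qed

lemma suff:
  assumes S: "S \<subseteq> equations K d" and ab: "(K-1)*d \<le> (M-d)+(N-d)"
  shows "card S \<le> card (\<Union>E\<in>S. var M N d E)"
proof -
  define a where "a = M - d"
  define b where "b = N - d"
  define T :: "(nat\<times>nat) set" where "T = (\<lambda>(k,j,m,n). (j,n)) ` S"
  define R :: "(nat\<times>nat) set" where "R = (\<lambda>(k,j,m,n). (k,m)) ` S"
  have finS: "finite S" using S eq_fin finite_subset by blast
  have finT: "finite T" unfolding T_def using finS by simp
  have finR: "finite R" unfolding R_def using finS by simp
  define F :: "nat\<times>nat \<Rightarrow> equation set" where "F = (\<lambda>(j,n). (\<lambda>(k,m). (k,j,m,n)) ` (({1..K}-{j}) \<times> {1..d}))"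
  define G :: "nat\<times>nat \<Rightarrow> equation set" where "G = (\<lambda>(k,m). (\<lambda>(j,n). (k,j,m,n)) ` (({1..K}-{k}) \<times> {1..d}))"
  have F_card: "card (F p) \<le> (K-1)*d" if "p \<in> T" for p
  proof -
    obtain j n where p: "p = (j,n)" by (cases p) auto
    have j: "j \<in> {1..K}" using that S unfolding T_def p equations_def by auto
    have "card (F p) \<le> card (({1..K}-{j}) \<times> {1..d})"
      unfolding F_def p prod.case by (rule card_image_le) simp
    also have "\<dots> = (K-1)*d" using j by (simp add: card_cartesian_product)
    finally show ?thesis .
  qed
  have G_card: "card (G p) \<le> (K-1)*d" if "p \<in> R" for p
  proof -
    obtain k m where p: "p = (k,m)" by (cases p) auto
    have k: "k \<in> {1..K}" using that S unfolding R_def p equations_def by auto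
    have "card (G p) \<le> card (({1..K}-{k}) \<times> {1..d})"
      unfolding G_def p prod.case by (rule card_image_le) simp
    also have "\<dots> = (K-1)*d" using k by (simp add: card_cartesian_product)
    finally show ?thesis .
  qed
  have S1: "S \<subseteq> (\<Union>p\<in>T. F p)"
  proof
    fix E assume E: "E \<in> S"
    obtain k j m n where e: "E = (k,j,m,n)" by (cases E) auto
    have "(j,n) \<in> T" unfolding T_def using E e by force
    moreover have "E \<in> F (j,n)"
    proof -
      have "E \<in> equations K d" using E S by blast
      hence "k \<in> {1..K}-{j}" "m \<in> {1..d}" unfolding e equations_def by auto
      thus ?thesis unfolding e F_def prod.case by (intro image_eqI[where x="(k,m)"]) auto
    qed
    ultimately show "E \<in> (\<Union>p\<in>T. F p)" by blast
  qed
  have S2: "S \<subseteq> (\<Union>p\<in>R. G p)"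
  proof
    fix E assume E: "E \<in> S"
    obtain k j m n where e: "E = (k,j,m,n)" by (cases E) auto
    have "(k,m) \<in> R" unfolding R_def using E e by force
    moreover have "E \<in> G (k,m)"
    proof -
      have "E \<in> equations K d" using E S by blast
      hence "j \<in> {1..K}-{k}" "n \<in> {1..d}" unfolding e equations_def by auto
      thus ?thesis unfolding e G_def prod.case by (intro image_eqI[where x="(j,n)"]) auto
    qed
    ultimately show "E \<in> (\<Union>p\<in>R. G p)" by blast
  qed
  have c1: "card S \<le> (K-1)*d * card T"
  proof -
    have "card S \<le> card (\<Union>p\<in>T. F p)"
      by (rule card_mono[OF _ S1]) (auto simp: finT F_def split: prod.splits)
    also have "\<dots> \<le> (\<Sum>p\<in>T. card (F p))" by (rule card_UN_le[OF finT])
    also have "\<dots> \<le> (\<Sum>p\<in>T. (K-1)*d)" by (rule sum_mono) (rule F_card)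
    finally show ?thesis by (simp add: mult.commute)
  qed
  have c2: "card S \<le> (K-1)*d * card R"
  proof -
    have "card S \<le> card (\<Union>p\<in>R. G p)"
      by (rule card_mono[OF _ S2]) (auto simp: finR G_def split: prod.splits)
    also have "\<dots> \<le> (\<Sum>p\<in>R. card (G p))" by (rule card_UN_le[OF finR])
    also have "\<dots> \<le> (\<Sum>p\<in>R. (K-1)*d)" by (rule sum_mono) (rule G_card)
    finally show ?thesis by (simp add: mult.commute)
  qed
  define X where "X = (\<lambda>((j,n),i). XV j n i) ` (T \<times> {..<a})"
  define Y where "Y = (\<lambda>((k,m),i). YV k m i) ` (R \<times> {..<b})"
  have cX: "card X = card T * a"
    unfolding X_def by (subst card_image) (auto simp: inj_on_def card_cartesian_product)
  have cY: "card Y = card R * b"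
    unfolding Y_def by (subst card_image) (auto simp: inj_on_def card_cartesian_product)
  have XY: "X \<union> Y \<subseteq> (\<Union>E\<in>S. var M N d E)"
  proof
    fix v assume "v \<in> X \<union> Y"
    then show "v \<in> (\<Union>E\<in>S. var M N d E)"
    proof
      assume "v \<in> X"
      then obtain j n i where v: "v = XV j n i" "(j,n) \<in> T" "i < a" unfolding X_def by auto
      then obtain k m where "(k,j,m,n) \<in> S" unfolding T_def by auto
      moreover have "v \<in> var M N d (k,j,m,n)" using v unfolding var_def a_def by auto
      ultimately show ?thesis by blast
    next
      assume "v \<in> Y"
      then obtain k m i where v: "v = YV k m i" "(k,m) \<in> R" "i < b" unfolding Y_def by auto
      then obtain j n where "(k,j,m,n) \<in> S" unfolding R_def by auto
      moreover have "v \<in> var M N d (k,j,m,n)" using v unfolding var_def b_def by auto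
      ultimately show ?thesis by blast
    qed
  qed
  have disj: "X \<inter> Y = {}" unfolding X_def Y_def by auto
  have "card X + card Y = card (X \<union> Y)"
    by (rule card_Un_disjoint[symmetric]) (auto simp: X_def Y_def finT finR disj)
  also have "\<dots> \<le> card (\<Union>E\<in>S. var M N d E)"
    by (rule card_mono[OF _ XY]) (simp add: finS var_fin)
  finally have U: "card T * a + card R * b \<le> card (\<Union>E\<in>S. var M N d E)" using cX cY by simp
  have ab': "(K-1)*d \<le> a + b" using ab a_def b_def by simp
  have "card S \<le> card T * a + card R * b"
  proof (cases "card T \<le> card R")
    case True
    have "card S \<le> (K-1)*d * card T" by (rule c1)
    also have "\<dots> \<le> (a+b) * card T" using ab' by simp
    also have "\<dots> \<le> card T * a + card R * b" using True
      by (simp add: algebra_simps)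
    finally show ?thesis .
  next
    case False
    have "card S \<le> (K-1)*d * card R" by (rule c2)
    also have "\<dots> \<le> (a+b) * card R" using ab' by simp
    also have "\<dots> \<le> card T * a + card R * b" using False
      by (simp add: algebra_simps)
    finally show ?thesis .
  qed
  with U show ?thesis by linarith
qed

lemma nec:
  assumes K: "K \<ge> 1" and d: "d \<ge> 1" and p: "proper K M N d"
  shows "(K-1)*d \<le> (M-d)+(N-d)"
proof -
  define a where "a = M - d"
  define b where "b = N - d"
  have eqs: "equations K d = (SIGMA k:{1..K}. ({1..K}-{k}) \<times> ({1..d}\<times>{1..d}))"
    unfolding equations_def by auto
  have ce: "card (equations K d) = K * ((K-1)*(d*d))"
    unfolding eqs by (simp add: card_cartesian_product)
  have U: "(\<Union>E\<in>equations K d. var M N d E) \<subseteq>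
     (\<lambda>((j,n),i). XV j n i) ` (({1..K}\<times>{1..d}) \<times> {..<a}) \<union>
     (\<lambda>((k,m),i). YV k m i) ` (({1..K}\<times>{1..d}) \<times> {..<b})"
  proof
    fix v assume "v \<in> (\<Union>E\<in>equations K d. var M N d E)"
    then obtain k j m n where e: "(k,j,m,n) \<in> equations K d" and v: "v \<in> var M N d (k,j,m,n)"
      by auto
    have r: "k \<in> {1..K}" "j \<in> {1..K}" "m \<in> {1..d}" "n \<in> {1..d}"
      using e unfolding equations_def by auto
    from v consider i where "v = XV j n i" "i < a" | i where "v = YV k m i" "i < b"
      unfolding var_def a_def b_def by auto
    then show "v \<in> (\<lambda>((j,n),i). XV j n i) ` (({1..K}\<times>{1..d}) \<times> {..<a}) \<union>
     (\<lambda>((k,m),i). YV k m i) ` (({1..K}\<times>{1..d}) \<times> {..<b})"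
    proof cases
      case (1 i) thus ?thesis using r by (intro UnI1 image_eqI[where x="((j,n),i)"]) auto
    next
      case (2 i) thus ?thesis using r by (intro UnI2 image_eqI[where x="((k,m),i)"]) auto
    qed
  qed
  have "card (\<Union>E\<in>equations K d. var M N d E) \<le> card (
     (\<lambda>((j,n),i). XV j n i) ` (({1..K}\<times>{1..d}) \<times> {..<a}) \<union>
     (\<lambda>((k,m),i). YV k m i) ` (({1..K}\<times>{1..d}) \<times> {..<b}))"
    by (rule card_mono[OF _ U]) simp
  also have "\<dots> \<le> card ((\<lambda>((j,n),i). XV j n i) ` (({1..K}\<times>{1..d}) \<times> {..<a})) +
      card ((\<lambda>((k,m),i). YV k m i) ` (({1..K}\<times>{1..d}) \<times> {..<b}))" by (rule card_Un_le)
  also have "\<dots> \<le> (K*d)*a + (K*d)*b"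
    by (intro add_mono order.trans[OF card_image_le]) (simp_all add: card_cartesian_product)
  finally have "card (\<Union>E\<in>equations K d. var M N d E) \<le> (K*d)*(a+b)"
    by (simp add: algebra_simps)
  moreover have "card (equations K d) \<le> card (\<Union>E\<in>equations K d. var M N d E)"
    using p unfolding proper_def by blast
  ultimately have "(K*d)*((K-1)*d) \<le> (K*d)*(a+b)" using ce by (simp add: algebra_simps)
  moreover have "K*d > 0" using K d by simp
  ultimately show ?thesis unfolding a_def b_def by simp
qed

lemma char:
  assumes "K \<ge> 1" "d \<ge> 1"
  shows "proper K M N d \<longleftrightarrow> (K-1)*d \<le> (M-d)+(N-d)"
  using nec[OF assms] suff unfolding proper_def by blast

theorem corollary2:
  fixes K M N d :: nat
  assumes "K \<ge> 2" and "0 < M" and "0 < N" and "0 < d" and "d \<le> min M N"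
  shows "(d \<le> min M (N - 1) \<longrightarrow> (proper K M N d \<longleftrightarrow> proper K (M + 1) (N - 1) d))
       \<and> (d \<le> min (M - 1) N \<longrightarrow> (proper K M N d \<longleftrightarrow> proper K (M - 1) (N + 1) d))"
proof -
  have K: "K \<ge> 1" and d: "d \<ge> 1" using assms by auto
  show ?thesis
    unfolding char[OF K d] using assms by auto
qed

end
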